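(* Let $k$ be a field of characteristic zero and let $N$ be a normal subgroup of $GA_3$ containing all diagonal automorphisms of $k^3$. Then the Nagata automorphism $$F=\big(X-2(Y^2+XZ)Y-(Y^2+XZ)^2Z,\ Y+(Y^2+XZ)Z,\ Z\big)$$ belongs to $N$.
   Context: $GA_3$ is the group (under composition) of polynomial automorphisms $G=(G_1,G_2,G_3)$ of $k^3$, with $G_i\in k[X,Y,Z]$. An automorphism is diagonal if it has the form $(c_1X,c_2Y,c_3Z)$ with $c_1,c_2,c_3\in k\setminus\{0\}$. *)

theory Defs
  imports "HOL-Computational_Algebra.Polynomial" "HOL-Algebra.Group" "HOL-Algebra.Coset"
begin

text \<open>The polynomial ring k[X,Y,Z] is represented as k[X][Y][Z], i.e. the type
  'a poly poly poly: the innermost variable is X, the middle one Y, the outermost Z.\<close>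

type_synonym 'a mpoly3 = "'a poly poly poly"

definition const3 :: "'a::comm_ring_1 \<Rightarrow> 'a mpoly3" where
  "const3 a = [:[:[:a:]:]:]"

definition varX :: "'a::comm_ring_1 mpoly3" where
  "varX = [:[:[:0, 1:]:]:]"

definition varY :: "'a::comm_ring_1 mpoly3" where
  "varY = [:[:0, 1:]:]"

definition varZ :: "'a::comm_ring_1 mpoly3" where
  "varZ = [:0, 1:]"

definition subst3 :: "'a::comm_ring_1 mpoly3 \<Rightarrow> 'a mpoly3 \<Rightarrow> 'a mpoly3 \<Rightarrow> 'a mpoly3 \<Rightarrow> 'a mpoly3" where
  "subst3 p q1 q2 q3 =
     poly (map_poly (\<lambda>c. poly (map_poly (\<lambda>b. poly (map_poly const3 b) q1) c) q2) p) q3"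

type_synonym 'a pmap3 = "'a mpoly3 \<times> 'a mpoly3 \<times> 'a mpoly3"

definition comp3 :: "'a::comm_ring_1 pmap3 \<Rightarrow> 'a pmap3 \<Rightarrow> 'a pmap3" where
  "comp3 G H = (case G of (G1, G2, G3) \<Rightarrow> case H of (H1, H2, H3) \<Rightarrow>
      (subst3 G1 H1 H2 H3, subst3 G2 H1 H2 H3, subst3 G3 H1 H2 H3))"

definition id3 :: "'a::comm_ring_1 pmap3" where
  "id3 = (varX, varY, varZ)"

definition GA3 :: "'a::comm_ring_1 pmap3 monoid" where
  "GA3 = \<lparr> carrier = {G. \<exists>H. comp3 G H = id3 \<and> comp3 H G = id3},
           mult = comp3, one = id3 \<rparr>"

definition diagonal3 :: "'a::comm_ring_1 pmap3 \<Rightarrow> bool" where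
  "diagonal3 G \<longleftrightarrow> (\<exists>c1 c2 c3. c1 \<noteq> 0 \<and> c2 \<noteq> 0 \<and> c3 \<noteq> 0 \<and>
      G = (const3 c1 * varX, const3 c2 * varY, const3 c3 * varZ))"

definition nagata :: "'a::comm_ring_1 pmap3" where
  "nagata = (let D = varY ^ 2 + varX * varZ in
     (varX - 2 * D * varY - D ^ 2 * varZ, varY + D * varZ, varZ))"

end

theory Submission imports Defs begin

definition rhom :: "('a::comm_ring_1 \<Rightarrow> 'b::comm_ring_1) \<Rightarrow> bool" where
  "rhom f \<longleftrightarrow> (\<forall>a b. f (a+b) = f a + f b) \<and> (\<forall>a b. f (a*b) = f a * f b) \<and> f 1 = 1"

lemma rhom_add: "rhom f \<Longrightarrow> f (a+b) = f a + f b" by (simp add: rhom_def)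
lemma rhom_mult: "rhom f \<Longrightarrow> f (a*b) = f a * f b" by (simp add: rhom_def)
lemma rhom_1: "rhom f \<Longrightarrow> f 1 = 1" by (simp add: rhom_def)
lemma rhom_0: "rhom f \<Longrightarrow> f 0 = 0"
proof -
  assume h: "rhom f"
  have "f (0+0) = f 0 + f 0" by (rule rhom_add[OF h])
  then show ?thesis by simp
qed
lemma rhom_neg: "rhom f \<Longrightarrow> f (-a) = - f a"
proof -
  assume h: "rhom f"
  have "f (-a + a) = f (-a) + f a" by (rule rhom_add[OF h])
  then have "f (-a) + f a = 0" using rhom_0[OF h] by simp
  then show ?thesis by (simp add: eq_neg_iff_add_eq_0)
qed
lemma rhom_diff: assumes h: "rhom f" shows "f (a - b) = f a - f b"
proof -
  have "f (a + -b) = f a + f (-b)" by (rule rhom_add[OF h])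
  then show ?thesis using rhom_neg[OF h, of b] by simp
qed
lemma rhom_pow: assumes h: "rhom f" shows "f (a ^ n) = f a ^ n"
  by (induction n) (simp_all add: rhom_mult[OF h] rhom_1[OF h])
lemma rhom_of_nat: assumes h: "rhom f" shows "f (of_nat n) = of_nat n"
  by (induction n) (simp_all add: rhom_add[OF h] rhom_1[OF h] rhom_0[OF h])
lemma rhom_numeral: assumes h: "rhom f" shows "f (numeral n) = numeral n"
  using rhom_of_nat[OF h, of "numeral n"] by simp

lemma rhom_sum: "rhom f \<Longrightarrow> f (sum g A) = sum (\<lambda>x. f (g x)) A"
  by (induction A rule: infinite_finite_induct) (auto simp: rhom_0 rhom_def)

lemma map_poly_add_h: "rhom f \<Longrightarrow> map_poly f (p + q) = map_poly f p + map_poly f q"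
  by (rule poly_eqI) (simp add: coeff_map_poly rhom_0 rhom_def)

lemma map_poly_mult_h: "rhom f \<Longrightarrow> map_poly f (p * q) = map_poly f p * map_poly f q"
  by (rule poly_eqI) (simp add: coeff_map_poly rhom_0 coeff_mult rhom_sum rhom_def)

lemma eval_hom: "rhom f \<Longrightarrow> rhom (\<lambda>p. poly (map_poly f p) x)"
  unfolding rhom_def[of "\<lambda>p. poly (map_poly f p) x"]
  by (simp add: map_poly_add_h map_poly_mult_h) (simp add: rhom_def)

lemma const3_hom: "rhom const3"
  unfolding rhom_def const3_def by (simp add: pCons_one)

lemma subst3_hom: "rhom (\<lambda>p. subst3 p q1 q2 q3)"
  unfolding subst3_def by (intro eval_hom const3_hom)

lemma hom_rules:
  assumes h: "rhom f"
  shows "f (a+b) = f a + f b" "f (a*b) = f a * f b" "f 1 = 1" "f 0 = 0"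
    "f (-a) = - f a" "f (a - b) = f a - f b" "f (a^n) = (f a)^n" "f (numeral m) = numeral m"
  by (rule rhom_add[OF h] rhom_mult[OF h] rhom_1[OF h] rhom_0[OF h] rhom_neg[OF h] rhom_diff[OF h]
     rhom_pow[OF h] rhom_numeral[OF h])+

lemmas subst3_rules = hom_rules[OF subst3_hom]

lemma subst3_vars: "subst3 varX q1 q2 q3 = q1" "subst3 varY q1 q2 q3 = q2" "subst3 varZ q1 q2 q3 = q3"
   "subst3 (const3 c) q1 q2 q3 = const3 c"
  by (simp_all add: subst3_def varX_def varY_def varZ_def const3_def map_poly_pCons pCons_one)

definition Fp :: "'a::comm_ring_1 mpoly3 \<Rightarrow> 'a pmap3" where
  "Fp p = (let D = varY ^ 2 + varX * varZ in
     (varX - 2 * p * D * varY - p^2 * D ^ 2 * varZ, varY + p * D * varZ, varZ))"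

lemma Fp_comp_gen: "comp3 (Fp p) (H1,H2,H3) = (let E = H2^2 + H1*H3; q = subst3 p H1 H2 H3 in
     (H1 - 2*q*E*H2 - q^2*E^2*H3, H2 + q*E*H3, H3))"
  unfolding Fp_def comp3_def Let_def
  using subst3_rules(8)[where m="num.Bit0 num.One" and ?q1.0=H1 and ?q2.0=H2 and ?q3.0=H3]
  by (simp add: subst3_rules subst3_vars del: subst3_rules(8))

lemma ring_inv: fixes X Y Z b :: "'b::comm_ring_1"
  shows "(Y + b*(Y^2+X*Z)*Z)^2 + (X - 2*b*(Y^2+X*Z)*Y - b^2*(Y^2+X*Z)^2*Z)*Z = Y^2+X*Z"
  by (simp add: algebra_simps power2_eq_square)
lemma ring_comp: fixes X Y Z a b E :: "'b::comm_ring_1"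
  shows "(X - 2*b*E*Y - b^2*E^2*Z) - 2*a*E*(Y + b*E*Z) - a^2*E^2*Z = X - 2*(a+b)*E*Y - (a+b)^2*E^2*Z"
    "(Y + b*E*Z) + a*E*Z = Y + (a+b)*E*Z"
  by (simp_all add: algebra_simps power2_eq_square)

lemma ring_comp2: fixes X Y Z a b E :: "'b::comm_ring_1"
  shows "(X - 2*b*E*Y - b^2*E^2*Z - 2*a*E*(Y + b*E*Z) - a^2*E^2*Z, Y + b*E*Z + a*E*Z, Z)
     = (X - 2*(a+b)*E*Y - (a+b)^2*E^2*Z, Y + (a+b)*E*Z, Z)"
  by (simp add: algebra_simps power2_eq_square)

lemma Fp_comp: "comp3 (Fp (const3 a)) (Fp (const3 b)) = Fp (const3 a + const3 b)"
proof -
  define E :: "'a mpoly3" where "E = varY ^ 2 + varX * varZ"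
  have HF: "Fp p = (varX - 2 * p * E * varY - p^2 * E ^ 2 * varZ,
       varY + p * E * varZ, varZ)" for p by (simp add: Fp_def Let_def E_def)
  have H: "Fp (const3 b) = (varX - 2 * const3 b * E * varY - (const3 b)^2 * E ^ 2 * varZ,
       varY + const3 b * E * varZ, varZ)" by (simp add: Fp_def Let_def E_def)
  have inv: "(varY + const3 b * E * varZ)^2 + (varX - 2 * const3 b * E * varY - (const3 b)^2 * E ^ 2 * varZ) * varZ = E"
    unfolding E_def by (rule ring_inv)
  have "comp3 (Fp (const3 a)) (Fp (const3 b)) = (varX - 2 * const3 b * E * varY - (const3 b)^2 * E ^ 2 * varZ -
      2 * const3 a * E * (varY + const3 b * E * varZ) - (const3 a)^2 * E^2 * varZ,
      varY + const3 b * E * varZ + const3 a * E * varZ, varZ)"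
    apply (subst H) apply (subst Fp_comp_gen) apply (unfold Let_def) apply (unfold inv subst3_vars) by simp
  also have "\<dots> = (varX - 2 * (const3 a + const3 b) * E * varY - (const3 a + const3 b)^2 * E ^ 2 * varZ,
       varY + (const3 a + const3 b) * E * varZ, varZ)"
    by (rule ring_comp2)
  also have "\<dots> = Fp (const3 a + const3 b)"
    by (rule HF[symmetric])
  finally show ?thesis .
qed

definition Dm :: "'a::comm_ring_1 pmap3" where
  "Dm = (const3 1 * varX, const3 (-1) * varY, const3 1 * varZ)"

lemma Dm_conj: "comp3 (comp3 Dm (Fp (const3 a))) Dm = Fp (- const3 a)"
  unfolding Fp_def comp3_def Let_def Dm_def
  by (simp add: subst3_rules subst3_vars hom_rules[OF const3_hom])

lemma const3_add: "const3 a + const3 b = const3 (a+b)" and const3_neg: "- const3 a = const3 (-a)"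
  and const3_one: "const3 1 = 1" and const3_zero: "const3 0 = 0"
  by (simp_all add: hom_rules[OF const3_hom])

lemma nagata_Fp: "nagata = Fp (const3 1)"
  by (simp add: nagata_def Fp_def const3_one)

lemma Fp_zero: "Fp (const3 0) = id3"
  by (simp add: Fp_def id3_def const3_zero)

theorem mainTheorem4:
  fixes N :: "'a::field_char_0 pmap3 set"
  assumes "N \<lhd> (GA3 :: 'a pmap3 monoid)"
    and "\<forall>G. diagonal3 G \<longrightarrow> G \<in> N"
  shows "(nagata :: 'a pmap3) \<in> N"
proof -
  interpret normal N "GA3 :: 'a pmap3 monoid" by (rule assms(1))
  let ?A = "Fp (const3 (-1/2) :: 'a mpoly3)"
  let ?B = "Fp (const3 (1/2) :: 'a mpoly3)"
  have AB: "comp3 ?A ?B = id3" "comp3 ?B ?A = id3"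
    unfolding Fp_comp const3_add by (simp_all add: Fp_zero)
  have mG: "x \<otimes>\<^bsub>GA3\<^esub> y = comp3 x y" for x y :: "'a pmap3" by (simp add: GA3_def)
  have oG: "\<one>\<^bsub>GA3\<^esub> = (id3 :: 'a pmap3)" by (simp add: GA3_def)
  have carI: "G \<in> carrier GA3" if "comp3 G H = id3" "comp3 H G = id3" for G H :: "'a pmap3"
  proof -
    have "\<exists>H. comp3 G H = id3 \<and> comp3 H G = id3" using that by blast
    then show ?thesis unfolding GA3_def by simp
  qed
  have Acar: "?A \<in> carrier GA3" by (rule carI[OF AB])
  have Bcar: "?B \<in> carrier GA3" by (rule carI[OF AB(2,1)])
  have invA: "inv\<^bsub>GA3\<^esub> ?A = ?B"
  proof -
    have e: "?B \<otimes>\<^bsub>GA3\<^esub> ?A = \<one>\<^bsub>GA3\<^esub>" unfolding mG oG by (rule AB(2))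
    show ?thesis using e Acar Bcar by (rule inv_equality)
  qed
  have dD: "diagonal3 (Dm :: 'a pmap3)" unfolding diagonal3_def Dm_def
    by (rule exI[of _ 1], rule exI[of _ "-1"], rule exI[of _ 1]) simp
  have DN: "(Dm :: 'a pmap3) \<in> N" using assms(2) dD by blast
  have Dcar: "(Dm :: 'a pmap3) \<in> carrier GA3" using DN subset by blast
  have "?A \<otimes>\<^bsub>GA3\<^esub> Dm \<otimes>\<^bsub>GA3\<^esub> inv\<^bsub>GA3\<^esub> ?A \<in> N"
    by (rule inv_op_closed2[OF Acar DN])
  then have "Dm \<otimes>\<^bsub>GA3\<^esub> (?A \<otimes>\<^bsub>GA3\<^esub> Dm \<otimes>\<^bsub>GA3\<^esub> ?B) \<in> N"
    using DN invA subgroup.m_closed[OF normal_imp_subgroup[OF assms(1)]] by metis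
  also have "Dm \<otimes>\<^bsub>GA3\<^esub> (?A \<otimes>\<^bsub>GA3\<^esub> Dm \<otimes>\<^bsub>GA3\<^esub> ?B)
      = (Dm \<otimes>\<^bsub>GA3\<^esub> ?A \<otimes>\<^bsub>GA3\<^esub> Dm) \<otimes>\<^bsub>GA3\<^esub> ?B"
    using Acar Bcar Dcar by (simp add: m_assoc)
  also have "\<dots> = comp3 (comp3 (comp3 Dm ?A) Dm) ?B" by (simp only: mG)
  also have "\<dots> = nagata"
    by (simp add: Dm_conj Fp_comp const3_add const3_neg nagata_Fp)
  finally show ?thesis .
qed

end
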